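(* Let $n\ge 1$ and consider any sequence of legal moves starting from $\{F_1^n\}$ that uses only splitting moves and $C_1$ moves. Then in every game state reached, if $i<j$ are indices such that $F_i$ and $F_j$ both occur in the state and no $F_l$ with $i<l<j$ occurs, then $j-i\le 3$.
   Context: Fibonacci numbers are indexed by $F_1=1$, $F_2=2$, $F_{i+1}=F_i+F_{i-1}$. A game state is a finite multiset of Fibonacci numbers (tracked by index); $\{F_1^n\}$ denotes $n$ copies of $F_1$. The moves considered are: $C_1$: replace $F_1,F_1$ by $F_2$; $S_2$: replace $F_2,F_2$ by $F_1,F_3$; for $i\ge 3$, $S_i$: replace $F_i,F_i$ by $F_{i-2},F_{i+1}$ (the "splitting moves"); each requires the two replaced elements to be present in the state. *)

theory Defs
  imports Main "HOL-Library.Multiset"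
begin

text \<open>A game state is a multiset of Fibonacci indices (index i stands for F_i,
with F_1 = 1, F_2 = 2). The allowed moves are C_1 and the splitting moves S_i.\<close>

definition move_C1 :: "nat multiset \<Rightarrow> nat multiset \<Rightarrow> bool" where
  "move_C1 M M' \<longleftrightarrow> {#1, 1#} \<subseteq># M \<and> M' = M - {#1, 1#} + {#2#}"

definition move_S :: "nat \<Rightarrow> nat multiset \<Rightarrow> nat multiset \<Rightarrow> bool" where
  "move_S i M M' \<longleftrightarrow>
     (i = 2 \<and> {#2, 2#} \<subseteq># M \<and> M' = M - {#2, 2#} + {#1, 3#}) \<or>
     (i \<ge> 3 \<and> {#i, i#} \<subseteq># M \<and> M' = M - {#i, i#} + {#i - 2, i + 1#})"

definition split_or_C1_move :: "nat multiset \<Rightarrow> nat multiset \<Rightarrow> bool" where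
  "split_or_C1_move M M' \<longleftrightarrow> move_C1 M M' \<or> (\<exists>i. move_S i M M')"

end

theory Submission
  imports Defs
begin

definition gapok :: "nat set \<Rightarrow> bool" where
  "gapok S \<longleftrightarrow> (\<forall>i j. i < j \<and> i \<in> S \<and> j \<in> S \<and> (\<forall>l. i < l \<and> l < j \<longrightarrow> l \<notin> S)
           \<longrightarrow> j - i \<le> 3)"

lemma fwd:
  assumes g: "gapok S" and x: "x \<in> S" and y: "y \<in> S" and xy: "x < y"
  shows "\<exists>z\<in>S. x < z \<and> z \<le> x + 3"
proof -
  define z where "z = (LEAST z. z \<in> S \<and> x < z)"
  have zS: "z \<in> S \<and> x < z" unfolding z_def by (rule LeastI[of _ y]) (use y xy in auto)
  have "\<forall>l. x < l \<and> l < z \<longrightarrow> l \<notin> S"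
    using not_less_Least unfolding z_def by blast
  with g zS x have "z - x \<le> 3" unfolding gapok_def by blast
  with zS show ?thesis by auto
qed

lemma bwd:
  assumes g: "gapok S" and x: "x \<in> S" and y: "y \<in> S" and xy: "x < y"
  shows "\<exists>z\<in>S. z < y \<and> y \<le> z + 3"
proof -
  define T where "T = {z\<in>S. z < y}"
  have fT: "finite T" unfolding T_def by auto
  have xT: "x \<in> T" using x xy unfolding T_def by auto
  define z where "z = Max T"
  have zT: "z \<in> T" unfolding z_def using fT xT Max_in by blast
  have "\<forall>l. z < l \<and> l < y \<longrightarrow> l \<notin> S"
    using Max_ge[OF fT] unfolding z_def T_def by fastforce
  with g zT y have "y - z \<le> 3" unfolding gapok_def T_def by blast
  with zT show ?thesis unfolding T_def by auto
qed

lemma stepS: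
  assumes g: "gapok S" and iS: "i \<in> S" and sub1: "S - {i} \<subseteq> S'" and sub2: "S' \<subseteq> S \<union> {a,b}"
    and aS: "a \<in> S'" and bS: "b \<in> S'" and ai: "a < i" and ib: "i < b" and ab: "b \<le> a + 3"
  shows "gapok S'"
  unfolding gapok_def
proof (intro allI impI)
  fix x y assume h: "x < y \<and> x \<in> S' \<and> y \<in> S' \<and> (\<forall>l. x < l \<and> l < y \<longrightarrow> l \<notin> S')"
  hence xy: "x < y" and xS': "x \<in> S'" and yS': "y \<in> S'" and btw: "\<And>l. x < l \<Longrightarrow> l < y \<Longrightarrow> l \<notin> S'" by auto
  have btwS: "\<And>l. x < l \<Longrightarrow> l < y \<Longrightarrow> l \<in> S \<Longrightarrow> l = i" using btw sub1 by blast
  show "y - x \<le> 3"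
  proof (cases "x < i \<and> i < y")
    case True
    have "\<not> (x < a \<and> a < y)" using btw aS by blast
    moreover have "\<not> (x < b \<and> b < y)" using btw bS by blast
    ultimately show ?thesis using True ai ib ab by linarith
  next
    case nb: False
    show ?thesis
    proof (cases "x \<in> S")
      case xS: True
      show ?thesis
      proof (cases "y \<in> S")
        case True
        obtain z where "z \<in> S" "x < z" "z \<le> x + 3" using fwd[OF g xS True xy] by blast
        moreover have "\<not> z < y" using btwS nb \<open>z \<in> S\<close> \<open>x < z\<close> by fastforce
        ultimately show ?thesis by linarith
      next
        case False
        hence "y = a \<or> y = b" using yS' sub2 by blast
        then show ?thesis
        proof
          assume ya: "y = a"
          hence "x < i" using xy ai by simp
          then obtain z where "z \<in> S" "x < z" "z \<le> x + 3" using fwd[OF g xS iS] by blast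
          moreover have "\<not> z < y" using btwS ya ai \<open>z \<in> S\<close> \<open>x < z\<close> by fastforce
          ultimately show ?thesis by linarith
        next
          assume yb: "y = b"
          have "\<not> (x < a \<and> a < y)" using btw aS by blast
          then show ?thesis using yb ab xy nb ai ib by linarith
        qed
      qed
    next
      case False
      hence "x = a \<or> x = b" using xS' sub2 by blast
      then show ?thesis
      proof
        assume xa: "x = a"
        have "\<not> (x < b \<and> b < y)" using btw bS by blast
        then show ?thesis using xa ab xy ai ib by linarith
      next
        assume xb: "x = b"
        have yS: "y \<in> S" using yS' sub2 xb xy ai ib by auto
        have "i < y" using xb ib xy by simp
        then obtain z where "z \<in> S" "z < y" "y \<le> z + 3" using bwd[OF g iS yS] by blast
        moreover have "\<not> x < z" using btwS xb ib \<open>z \<in> S\<close> \<open>z < y\<close> by fastforce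
        ultimately show ?thesis by linarith
      qed
    qed
  qed
qed

lemma stepC:
  assumes g: "gapok S" and sub1: "S - {1} \<subseteq> S'" and sub2: "S' \<subseteq> S \<union> {2}"
    and bS: "(2::nat) \<in> S'" and oS: "1 \<in> S"
  shows "gapok S'"
  unfolding gapok_def
proof (intro allI impI)
  fix x y assume h: "x < y \<and> x \<in> S' \<and> y \<in> S' \<and> (\<forall>l. x < l \<and> l < y \<longrightarrow> l \<notin> S')"
  hence xy: "x < y" and xS': "x \<in> S'" and yS': "y \<in> S'" and btw: "\<And>l. x < l \<Longrightarrow> l < y \<Longrightarrow> l \<notin> S'" by auto
  have btwS: "\<And>l. x < l \<Longrightarrow> l < y \<Longrightarrow> l \<in> S \<Longrightarrow> l = 1" using btw sub1 by blast
  have n2: "\<not> (x < 2 \<and> 2 < y)" using btw bS by blast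
  show "y - x \<le> 3"
  proof (cases "x < 2")
    case True thus ?thesis using n2 xy by linarith
  next
    case x2: False
    have yS: "y \<in> S" using yS' sub2 xy x2 by auto
    show ?thesis
    proof (cases "x \<in> S")
      case xS: True
      obtain z where "z \<in> S" "x < z" "z \<le> x + 3" using fwd[OF g xS yS xy] by blast
      moreover have "\<not> z < y" using btwS x2 \<open>z \<in> S\<close> \<open>x < z\<close> by fastforce
      ultimately show ?thesis by linarith
    next
      case False
      hence x2': "x = 2" using xS' sub2 by auto
      obtain z where "z \<in> S" "z < y" "y \<le> z + 3" using bwd[OF g oS yS] xy x2' by auto
      moreover have "\<not> x < z" using btwS x2' \<open>z \<in> S\<close> \<open>z < y\<close> by fastforce
      ultimately show ?thesis using x2' by linarith
    qed
  qed
qed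

lemma set_diff_sub: "set_mset M - {i} \<subseteq> set_mset (M - {#i, i#} + N)"
  by (auto simp: in_diff_count)

lemma inv: "split_or_C1_move\<^sup>*\<^sup>* M0 M \<Longrightarrow> gapok (set_mset M0) \<Longrightarrow> gapok (set_mset M)"
proof (induction rule: rtranclp_induct)
  case base thus ?case by simp
next
  case (step M M')
  have g: "gapok (set_mset M)" using step by simp
  have sub2: "\<And>i N. set_mset (M - {#i, i#} + N) \<subseteq> set_mset M \<union> set_mset N"
    using in_diffD by fastforce
  from step(2) show ?case unfolding split_or_C1_move_def
  proof (elim disjE exE)
    assume "move_C1 M M'"
    hence c: "{#1, 1#} \<subseteq># M" "M' = M - {#1, 1#} + {#2#}" unfolding move_C1_def by auto
    have "1 \<in># M" using c(1) by (meson insert_subset_eq_iff)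
    then show ?thesis using stepC[OF g] set_diff_sub[of M 1 "{#2#}"] sub2[of 1 "{#2#}"] c(2) by auto
  next
    fix i assume "move_S i M M'"
    then consider "{#2, 2#} \<subseteq># M" "M' = M - {#2, 2#} + {#1, 3#}"
      | "i \<ge> 3" "{#i, i#} \<subseteq># M" "M' = M - {#i, i#} + {#i - 2, i + 1#}"
      unfolding move_S_def by blast
    then show ?thesis
    proof cases
      case 1
      have "2 \<in># M" using 1(1) by (meson insert_subset_eq_iff)
      then show ?thesis using stepS[OF g, of 2 _ 1 3] set_diff_sub[of M 2 "{#1,3#}"] sub2[of 2 "{#1,3#}"] 1(2) by auto
    next
      case 2
      have "i \<in># M" using 2(2) by (meson insert_subset_eq_iff)
      then show ?thesis using stepS[OF g, of i _ "i-2" "i+1"] set_diff_sub[of M i "{#i-2,i+1#}"]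
          sub2[of i "{#i-2,i+1#}"] 2 by auto
    qed
  qed
qed

theorem mainTheorem11:
  fixes n :: nat and M :: "nat multiset"
  assumes "n \<ge> 1"
    and "split_or_C1_move\<^sup>*\<^sup>* (replicate_mset n 1) M"
  shows "\<forall>i j. i < j \<and> i \<in># M \<and> j \<in># M \<and> (\<forall>l. i < l \<and> l < j \<longrightarrow> l \<notin># M)
           \<longrightarrow> j - i \<le> 3"
proof -
  have "gapok (set_mset (replicate_mset n 1))" unfolding gapok_def by auto
  from inv[OF assms(2) this] show ?thesis unfolding gapok_def by blast
qed

end
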